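(* Let $\varphi$ be a bounded setfunction defined on a set-algebra $(J,\mathcal{B})$, with $\varphi(\emptyset)=0$. Then there exists a sequence $(\varphi_n\colon n\in\mathbb{N})$ of finite quotients of $\varphi$ such that $\varphi_n\rightarrowtail\varphi$.
   Context: A set-algebra $(J,\mathcal{B})$ is a family of subsets of $J$ containing $\emptyset$ and closed under complement and finite union; a setfunction on it is a map $\mathcal{B}\to\mathbb{R}$. For $k\in\mathbb{N}$ and a map $F\colon J\to[k]$ with $F^{-1}(i)\in\mathcal{B}$ for every $i$, the quotient $\varphi\circ F^{-1}$ is the setfunction $A\mapsto\varphi(F^{-1}(A))$ on $2^{[k]}$ (a finite quotient); $Q_k(\varphi)\subseteq\mathbb{R}^{2^k}$ is the set of all quotients of $\varphi$ on $[k]$. $\varphi_n\rightarrowtail\varphi$ means that for every $k\in\mathbb{N}$ the Hausdorff distance in Euclidean $\mathbb{R}^{2^k}$ between $Q_k(\varphi_n)$ and $Q_k(\varphi)$ tends to $0$. *)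

theory Defs
  imports "HOL-Analysis.Analysis"
begin

text \<open>Set-algebras (J,B) are rendered by the library predicate algebra J B
  (B is a family of subsets of J containing the empty set, closed under
  complement in J and finite unions). A setfunction is phi :: 'a set => real,
  only its values on B matter.\<close>

definition quotient_map :: "'a set \<Rightarrow> 'a set set \<Rightarrow> nat \<Rightarrow> ('a \<Rightarrow> nat) \<Rightarrow> bool" where
  "quotient_map J B k F \<longleftrightarrow> F ` J \<subseteq> {1..k} \<and> (\<forall>i\<in>{1..k}. {x\<in>J. F x = i} \<in> B)"

definition quot :: "'a set \<Rightarrow> ('a set \<Rightarrow> real) \<Rightarrow> nat \<Rightarrow> ('a \<Rightarrow> nat) \<Rightarrow> nat set \<Rightarrow> real" where
  "quot J phi k F = (\<lambda>A. if A \<subseteq> {1..k} then phi {x\<in>J. F x \<in> A} else 0)"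

definition Qset :: "'a set \<Rightarrow> 'a set set \<Rightarrow> ('a set \<Rightarrow> real) \<Rightarrow> nat \<Rightarrow> (nat set \<Rightarrow> real) set" where
  "Qset J B phi k = {quot J phi k F | F. quotient_map J B k F}"

text \<open>Euclidean distance in R^{2^k}, coordinates indexed by subsets of [k].\<close>
definition edist :: "nat \<Rightarrow> (nat set \<Rightarrow> real) \<Rightarrow> (nat set \<Rightarrow> real) \<Rightarrow> real" where
  "edist k u v = sqrt (\<Sum>A\<in>Pow {1..k}. (u A - v A)\<^sup>2)"

definition hdist :: "nat \<Rightarrow> (nat set \<Rightarrow> real) set \<Rightarrow> (nat set \<Rightarrow> real) set \<Rightarrow> real" where
  "hdist k S T = max (SUP u\<in>S. INF v\<in>T. edist k u v) (SUP v\<in>T. INF u\<in>S. edist k u v)"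

end

theory Submission
  imports Defs
begin

lemma qm_fiber:
  assumes "algebra J B" "quotient_map J B k F"
  shows "{x\<in>J. F x = j} \<in> B"
proof (cases "j \<in> {1..k}")
  case True then show ?thesis using assms(2) unfolding quotient_map_def by blast
next
  case False
  then have e: "{x\<in>J. F x = j} = {}" using assms(2) unfolding quotient_map_def by auto
  interpret algebra J B by fact
  show ?thesis unfolding e by simp
qed

lemma qm_preimage:
  assumes "algebra J B" "quotient_map J B k F" "finite A"
  shows "{x\<in>J. F x \<in> A} \<in> B"
proof -
  have "{x\<in>J. F x \<in> A} = (\<Union>i\<in>A. {x\<in>J. F x = i})" by auto
  also have "\<dots> \<in> B"
    using assms by (intro ring_of_sets.finite_UN[OF algebra.axioms(1)[OF assms(1)]]) (auto intro: qm_fiber)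
  finally show ?thesis .
qed

lemma quot_cong:
  assumes "\<And>x. x \<in> J \<Longrightarrow> F x = F' x"
  shows "quot J phi k F = quot J phi k F'"
  unfolding quot_def using assms by (intro ext) (auto intro!: arg_cong[where f=phi])

lemma quot_comp:
  assumes "quotient_map J B m H" "G ` {1..m} \<subseteq> {1..k}"
  shows "quot {1..m} (quot J phi m H) k G = quot J phi k (\<lambda>x. G (H x))"
proof (rule ext)
  fix A
  have "{y \<in> J. H y \<in> {x \<in> {1..m}. G x \<in> A}} = {x \<in> J. G (H x) \<in> A}"
    using assms(1) unfolding quotient_map_def by auto
  then show "quot {1..m} (quot J phi m H) k G A = quot J phi k (\<lambda>x. G (H x)) A"
    unfolding quot_def by auto
qed

lemma qm_comp:
  assumes "algebra J B" "quotient_map J B m H" "G ` {1..m} \<subseteq> {1..k}"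
  shows "quotient_map J B k (\<lambda>x. G (H x))"
  unfolding quotient_map_def
proof
  show "(\<lambda>x. G (H x)) ` J \<subseteq> {1..k}" using assms(2,3) unfolding quotient_map_def by auto
  show "\<forall>i\<in>{1..k}. {x \<in> J. G (H x) = i} \<in> B"
  proof
    fix i
    have "{x \<in> J. G (H x) = i} = {x \<in> J. H x \<in> {j\<in>{1..m}. G j = i}}"
      using assms(2) unfolding quotient_map_def by auto
    also have "\<dots> \<in> B" by (rule qm_preimage[OF assms(1,2)]) simp
    finally show "{x \<in> J. G (H x) = i} \<in> B" .
  qed
qed

lemma Qset_sub:
  assumes "algebra J B" "quotient_map J B m H"
  shows "Qset {1..m} (Pow {1..m}) (quot J phi m H) k \<subseteq> Qset J B phi k"
proof
  fix u assume "u \<in> Qset {1..m} (Pow {1..m}) (quot J phi m H) k"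
  then obtain G where G: "quotient_map {1..m} (Pow {1..m}) k G" "u = quot {1..m} (quot J phi m H) k G"
    unfolding Qset_def by auto
  have Gi: "G ` {1..m} \<subseteq> {1..k}" using G(1) unfolding quotient_map_def by auto
  show "u \<in> Qset J B phi k"
    unfolding Qset_def using G(2) quot_comp[OF assms(2) Gi] qm_comp[OF assms Gi] by auto
qed

lemma Qset_nonempty:
  assumes "k \<ge> 1"
  shows "Qset {1..m} (Pow {1..m}) psi k \<noteq> {}"
proof -
  have "quotient_map {1..m} (Pow {1..m}) k (\<lambda>_. 1)" unfolding quotient_map_def using assms by auto
  then show ?thesis unfolding Qset_def by auto
qed

lemma edist_nonneg: "0 \<le> edist k u v"
  unfolding edist_def by (simp add: sum_nonneg)

lemma edist_self: "edist k u u = 0"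
  unfolding edist_def by simp

lemma hdist_bound:
  assumes "S \<subseteq> T" "S \<noteq> {}" "\<And>v. v \<in> T \<Longrightarrow> \<exists>u\<in>S. edist k u v \<le> e"
  shows "0 \<le> hdist k S T \<and> hdist k S T \<le> e"
proof -
  have 1: "(INF v\<in>T. edist k u v) = 0" if "u \<in> S" for u
  proof (rule antisym)
    show "(INF v\<in>T. edist k u v) \<le> 0"
      using that assms(1) by (metis cINF_lower bdd_belowI2 edist_nonneg edist_self subsetD)
    show "0 \<le> (INF v\<in>T. edist k u v)"
      using that assms(1) by (intro cINF_greatest) (auto simp: edist_nonneg)
  qed
  have 2: "(SUP u\<in>S. INF v\<in>T. edist k u v) = 0"
  proof -
    have "(SUP u\<in>S. INF v\<in>T. edist k u v) = (SUP u\<in>S. (0::real))"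
      by (rule SUP_cong) (simp_all add: 1)
    also have "\<dots> = 0" using assms(2) by (rule cSUP_const)
    finally show ?thesis .
  qed
  have 3: "(SUP v\<in>T. INF u\<in>S. edist k u v) \<le> e"
  proof (rule cSUP_least)
    show "T \<noteq> {}" using assms(1,2) by auto
    fix v assume "v \<in> T"
    then obtain u where "u \<in> S" "edist k u v \<le> e" using assms(3) by auto
    have "(INF u\<in>S. edist k u v) \<le> edist k u v"
      by (rule cINF_lower) (auto intro: bdd_belowI2[where m=0] edist_nonneg \<open>u \<in> S\<close>)
    then show "(INF u\<in>S. edist k u v) \<le> e" using \<open>edist k u v \<le> e\<close> by linarith
  qed
  have "0 \<le> e"
  proof -
    obtain v where "v \<in> T" using assms(1,2) by auto
    then obtain u where "edist k u v \<le> e" using assms(3) by auto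
    then show ?thesis using edist_nonneg[of k u v] by linarith
  qed
  show ?thesis unfolding hdist_def 2 using 3 \<open>0 \<le> e\<close> by auto
qed

lemma encode:
  assumes "algebra J B" "finite (T ` J)" "\<And>v. {x\<in>J. T x = v} \<in> B"
  shows "\<exists>m H D. quotient_map J B m H \<and> D ` {1..m} \<subseteq> T ` J \<and> (\<forall>x\<in>J. T x = D (H x))"
proof -
  obtain h where h: "bij_betw h (T ` J) {0..<card (T ` J)}" using ex_bij_betw_finite_nat[OF assms(2)] by blast
  define m where "m = card (T ` J)"
  define H where "H = (\<lambda>x. Suc (h (T x)))"
  define D where "D = (\<lambda>i. inv_into (T ` J) h (i - 1))"
  have HD: "T x = D (H x)" if "x \<in> J" for x
    unfolding H_def D_def using h that by (simp add: bij_betw_inv_into_left)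
  have hl: "h (T x) < card (T ` J)" if "x \<in> J" for x
    using h that by (metis bij_betw_apply imageI atLeastLessThan_iff)
  have Hr: "H ` J \<subseteq> {1..m}"
    unfolding H_def m_def using hl by (auto simp: Suc_le_eq)
  have Dr: "D ` {1..m} \<subseteq> T ` J"
  proof
    fix y assume "y \<in> D ` {1..m}"
    then obtain i where "i \<in> {1..m}" "y = D i" by auto
    then have "i - 1 \<in> h ` (T ` J)" using h unfolding m_def bij_betw_def by auto
    then show "y \<in> T ` J" using \<open>y = D i\<close> unfolding D_def by (simp add: inv_into_into)
  qed
  have "{x\<in>J. H x = i} \<in> B" if "i \<in> {1..m}" for i
  proof -
    have "H x = i \<longleftrightarrow> T x = D i" if x: "x \<in> J" for x
    proof
      assume "H x = i" then show "T x = D i" using HD x by auto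
    next
      assume "T x = D i"
      have "i - 1 \<in> h ` (T ` J)" using h \<open>i \<in> {1..m}\<close> unfolding m_def bij_betw_def by auto
      then have "h (D i) = i - 1" unfolding D_def by (simp add: f_inv_into_f)
      then show "H x = i" using \<open>T x = D i\<close> \<open>i \<in> {1..m}\<close> unfolding H_def by auto
    qed
    then have "{x\<in>J. H x = i} = {x\<in>J. T x = D i}" by blast
    then show ?thesis using assms(3) by simp
  qed
  then have "quotient_map J B m H" using Hr unfolding quotient_map_def by auto
  then show ?thesis using Dr HD by (intro exI[of _ m] exI[of _ H] exI[of _ D]) simp
qed

lemma refine2:
  assumes "algebra J B" "quotient_map J B m1 H1" "quotient_map J B k F"
  shows "\<exists>m H G1 G2. quotient_map J B m H \<and> G1 ` {1..m} \<subseteq> {1..m1} \<and> G2 ` {1..m} \<subseteq> {1..k}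
     \<and> (\<forall>x\<in>J. H1 x = G1 (H x) \<and> F x = G2 (H x))"
proof -
  interpret algebra J B by fact
  define T where "T = (\<lambda>x. (H1 x, F x))"
  have TJ: "T ` J \<subseteq> {1..m1} \<times> {1..k}"
    using assms(2,3) unfolding T_def quotient_map_def by (auto simp: image_subset_iff)
  have fin: "finite (T ` J)"
    by (rule finite_subset[OF TJ]) simp
  have fib: "{x\<in>J. T x = v} \<in> B" for v
  proof -
    have "{x\<in>J. T x = v} = {x\<in>J. H1 x = fst v} \<inter> {x\<in>J. F x = snd v}"
      unfolding T_def by auto
    then show ?thesis using qm_fiber[OF assms(1,2), of "fst v"] qm_fiber[OF assms(1,3), of "snd v"] by (simp add: Int)
  qed
  obtain m H D where mHD: "quotient_map J B m H" "D ` {1..m} \<subseteq> T ` J" "\<forall>x\<in>J. T x = D (H x)"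
    using encode[OF assms(1) fin fib] by blast
  have DT: "D i \<in> {1..m1} \<times> {1..k}" if "i \<in> {1..m}" for i
    using mHD(2) TJ that by blast
  have "(\<lambda>i. fst (D i)) ` {1..m} \<subseteq> {1..m1}" "(\<lambda>i. snd (D i)) ` {1..m} \<subseteq> {1..k}"
    using DT by (auto simp: mem_Times_iff)
  moreover have "\<forall>x\<in>J. H1 x = fst (D (H x)) \<and> F x = snd (D (H x))"
  proof
    fix x assume "x \<in> J"
    then have "(H1 x, F x) = D (H x)" using mHD(3) unfolding T_def by simp
    then show "H1 x = fst (D (H x)) \<and> F x = snd (D (H x))" by (metis fst_conv snd_conv)
  qed
  ultimately show ?thesis using mHD(1)
    by (intro exI[of _ m] exI[of _ H] exI[of _ "\<lambda>i. fst (D i)"] exI[of _ "\<lambda>i. snd (D i)"]) simp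
qed

lemma refine:
  assumes "algebra J B" "finite P" "\<And>k F. (k, F) \<in> P \<Longrightarrow> quotient_map J B k F"
  shows "\<exists>m H. quotient_map J B m H \<and> (\<forall>(k, F)\<in>P. \<exists>G. G ` {1..m} \<subseteq> {1..k} \<and> (\<forall>x\<in>J. F x = G (H x)))"
  using assms(2,3)
proof (induction P rule: finite_induct)
  case empty
  interpret algebra J B by fact
  have "quotient_map J B 1 (\<lambda>_. 1)" unfolding quotient_map_def by auto
  then show ?case by blast
next
  case (insert p P)
  obtain k F where p: "p = (k, F)" by fastforce
  obtain m1 H1 where H1: "quotient_map J B m1 H1"
    "\<forall>(k, F)\<in>P. \<exists>G. G ` {1..m1} \<subseteq> {1..k} \<and> (\<forall>x\<in>J. F x = G (H1 x))"
    using insert.IH insert.prems by blast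
  have qF: "quotient_map J B k F" using insert.prems p by blast
  obtain m H G1 G2 where R: "quotient_map J B m H" "G1 ` {1..m} \<subseteq> {1..m1}" "G2 ` {1..m} \<subseteq> {1..k}"
     "\<forall>x\<in>J. H1 x = G1 (H x) \<and> F x = G2 (H x)"
    using refine2[OF assms(1) H1(1) qF] by blast
  have "\<forall>(k', F')\<in>insert p P. \<exists>G. G ` {1..m} \<subseteq> {1..k'} \<and> (\<forall>x\<in>J. F' x = G (H x))"
  proof (intro ballI, clarify)
    fix k' F' assume "(k', F') \<in> insert p P"
    then consider "(k', F') = (k, F)" | "(k', F') \<in> P" using p by fast
    then show "\<exists>G. G ` {1..m} \<subseteq> {1..k'} \<and> (\<forall>x\<in>J. F' x = G (H x))"
    proof cases
      case 1 then have "k' = k" "F' = F" by simp_all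
      then show ?thesis using R(3,4) by (intro exI[of _ G2]) simp
    next
      case 2
      then obtain G where G: "G ` {1..m1} \<subseteq> {1..k'}" "\<forall>x\<in>J. F' x = G (H1 x)"
        using H1(2) by fast
      have "(\<lambda>i. G (G1 i)) ` {1..m} \<subseteq> {1..k'}" using G(1) R(2) by (simp add: image_subset_iff)
      moreover have "\<forall>x\<in>J. F' x = G (G1 (H x))" using G(2) R(4) by simp
      ultimately show ?thesis by (intro exI[of _ "\<lambda>i. G (G1 i)"]) simp
    qed
  qed
  then show ?case using R(1) by (intro exI[of _ m] exI[of _ H]) simp
qed

lemma floor_eq_close:
  fixes a b :: real
  assumes "\<lfloor>a\<rfloor> = \<lfloor>b\<rfloor>"
  shows "\<bar>a - b\<bar> < 1"
proof -
  have "of_int \<lfloor>a\<rfloor> \<le> a" "a < of_int \<lfloor>a\<rfloor> + 1" "of_int \<lfloor>b\<rfloor> \<le> b" "b < of_int \<lfloor>b\<rfloor> + 1"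
    by simp_all
  then show ?thesis using assms by linarith
qed

lemma edist_le:
  assumes "\<And>A. A \<in> Pow {1..k} \<Longrightarrow> \<bar>u A - v A\<bar> \<le> d"
  shows "edist k u v \<le> 2 ^ k * d"
proof -
  have d0: "0 \<le> d" using assms[of "{}"] by simp
  have "(\<Sum>A\<in>Pow {1..k}. (u A - v A)\<^sup>2) \<le> (\<Sum>A\<in>Pow {1..k}. d\<^sup>2)"
  proof (rule sum_mono)
    fix A assume "A \<in> Pow {1..k}"
    then have "\<bar>u A - v A\<bar> \<le> \<bar>d\<bar>" using assms d0 by simp
    then show "(u A - v A)\<^sup>2 \<le> d\<^sup>2" by (simp add: abs_le_square_iff)
  qed
  also have "\<dots> = 2 ^ k * d\<^sup>2" by (simp add: card_Pow)
  also have "\<dots> \<le> (2 ^ k * d)\<^sup>2"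
  proof -
    have "(2::real) ^ k \<le> (2 ^ k)\<^sup>2" by (simp add: power2_eq_square)
    then have "(2::real) ^ k * d\<^sup>2 \<le> (2 ^ k)\<^sup>2 * d\<^sup>2" by (rule mult_right_mono) simp
    then show ?thesis by (simp add: power_mult_distrib)
  qed
  finally have "sqrt (\<Sum>A\<in>Pow {1..k}. (u A - v A)\<^sup>2) \<le> sqrt ((2 ^ k * d)\<^sup>2)"
    by (rule real_sqrt_le_mono)
  then show ?thesis unfolding edist_def using d0 by simp
qed

lemma Qset_bound:
  assumes "algebra J B" "\<forall>A\<in>B. \<bar>phi A\<bar> \<le> C" "u \<in> Qset J B phi k"
  shows "\<bar>u A\<bar> \<le> C"
proof -
  obtain F where F: "quotient_map J B k F" "u = quot J phi k F" using assms(3) unfolding Qset_def by auto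
  have C0: "0 \<le> C"
  proof -
    interpret algebra J B by fact
    show ?thesis using assms(2) by (metis empty_sets abs_ge_zero order_trans)
  qed
  show ?thesis
  proof (cases "A \<subseteq> {1..k}")
    case True
    then have "finite A" using finite_subset by blast
    then have "{x\<in>J. F x \<in> A} \<in> B" by (rule qm_preimage[OF assms(1) F(1)])
    then show ?thesis using True assms(2) F(2) unfolding quot_def by simp
  next
    case False
    then show ?thesis using F(2) C0 unfolding quot_def by simp
  qed
qed

lemma net:
  assumes "algebra J B" "\<forall>A\<in>B. \<bar>phi A\<bar> \<le> C" "0 < e"
  shows "\<exists>N. finite N \<and> N \<subseteq> Qset J B phi k \<and> (\<forall>v\<in>Qset J B phi k. \<exists>u\<in>N. edist k u v \<le> e)"
proof -
  define Q where "Q = Qset J B phi k"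
  define d :: real where "d = e / 2 ^ k"
  have d0: "0 < d" unfolding d_def using assms(3) by simp
  define r where "r = (\<lambda>u. restrict (\<lambda>A. \<lfloor>u A / d\<rfloor>) (Pow {1..k}))"
  have rQ: "r ` Q \<subseteq> (\<Pi>\<^sub>E A\<in>Pow {1..k}. {\<lfloor>-C/d\<rfloor>..\<lfloor>C/d\<rfloor>})"
  proof
    fix w assume "w \<in> r ` Q"
    then obtain u where u: "u \<in> Q" "w = r u" by auto
    have "\<lfloor>u A / d\<rfloor> \<in> {\<lfloor>-C/d\<rfloor>..\<lfloor>C/d\<rfloor>}" for A
    proof -
      have "\<bar>u A\<bar> \<le> C" using Qset_bound[OF assms(1,2)] u(1) unfolding Q_def by blast
      then have "-C \<le> u A" "u A \<le> C" by linarith+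
      then have "-C/d \<le> u A / d" "u A / d \<le> C/d"
        using d0 divide_right_mono[of "-C" "u A" d] divide_right_mono[of "u A" C d] by simp_all
      then show ?thesis by (simp add: floor_mono)
    qed
    then show "w \<in> (\<Pi>\<^sub>E A\<in>Pow {1..k}. {\<lfloor>-C/d\<rfloor>..\<lfloor>C/d\<rfloor>})" unfolding u(2) r_def by simp
  qed
  have finR: "finite (r ` Q)"
    by (rule finite_subset[OF rQ]) (intro finite_PiE; simp)
  define rep where "rep = (\<lambda>w. SOME u. u \<in> Q \<and> r u = w)"
  have rep: "rep (r v) \<in> Q \<and> r (rep (r v)) = r v" if "v \<in> Q" for v
    unfolding rep_def by (rule someI[of _ v]) (simp add: that)
  define N where "N = rep ` (r ` Q)"
  have "finite N" unfolding N_def using finR by simp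
  moreover have "N \<subseteq> Q" unfolding N_def using rep by auto
  moreover have "\<exists>u\<in>N. edist k u v \<le> e" if "v \<in> Q" for v
  proof -
    define u where "u = rep (r v)"
    have uN: "u \<in> N" unfolding u_def N_def using that by simp
    have ru: "r u = r v" using rep[OF that] unfolding u_def by simp
    have "\<bar>u A - v A\<bar> \<le> d" if A: "A \<in> Pow {1..k}" for A
    proof -
      have "\<lfloor>u A / d\<rfloor> = \<lfloor>v A / d\<rfloor>" using fun_cong[OF ru, of A] A unfolding r_def by simp
      then have "\<bar>u A / d - v A / d\<bar> < 1" by (rule floor_eq_close)
      then have "\<bar>(u A - v A) / d\<bar> < 1" by (simp add: diff_divide_distrib)
      then have "\<bar>u A - v A\<bar> / d < 1" using d0 by simp
      then show ?thesis using d0 by (simp add: divide_less_eq)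
    qed
    then have "edist k u v \<le> 2 ^ k * d" by (rule edist_le)
    also have "\<dots> = e" unfolding d_def by simp
    finally show ?thesis using uN by blast
  qed
  ultimately show ?thesis unfolding Q_def by blast
qed

lemma approx:
  assumes "algebra J B" "\<forall>A\<in>B. \<bar>phi A\<bar> \<le> C" "0 < e" "finite K"
  shows "\<exists>m H. quotient_map J B m H \<and> (\<forall>k\<in>K. \<forall>v\<in>Qset J B phi k.
           \<exists>u\<in>Qset {1..m} (Pow {1..m}) (quot J phi m H) k. edist k u v \<le> e)"
proof -
  have "\<forall>k. \<exists>N. finite N \<and> N \<subseteq> Qset J B phi k \<and> (\<forall>v\<in>Qset J B phi k. \<exists>u\<in>N. edist k u v \<le> e)"
    using net[OF assms(1,2,3)] by blast
  from choice[OF this] obtain N where N: "\<And>k. finite (N k)" "\<And>k. N k \<subseteq> Qset J B phi k"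
    "\<And>k v. v \<in> Qset J B phi k \<Longrightarrow> \<exists>u\<in>N k. edist k u v \<le> e" by blast
  define pick where "pick = (\<lambda>k u. SOME F. quotient_map J B k F \<and> u = quot J phi k F)"
  have pick: "quotient_map J B k (pick k u) \<and> u = quot J phi k (pick k u)" if "u \<in> Qset J B phi k" for k u
  proof -
    have "\<exists>F. quotient_map J B k F \<and> u = quot J phi k F" using that unfolding Qset_def by blast
    then show ?thesis unfolding pick_def by (rule someI_ex)
  qed
  define P where "P = (\<lambda>(k, u). (k, pick k u)) ` (SIGMA k:K. N k)"
  have finP: "finite P" unfolding P_def using assms(4) N(1) by simp
  have qP: "quotient_map J B k F" if "(k, F) \<in> P" for k F
  proof -
    from that obtain k' u where ku: "k' \<in> K" "u \<in> N k'" "(k, F) = (k', pick k' u)"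
      unfolding P_def by auto
    then have "u \<in> Qset J B phi k'" using N(2) by blast
    then show ?thesis using pick ku(3) by simp
  qed
  obtain m H where mH: "quotient_map J B m H"
    "\<forall>(k, F)\<in>P. \<exists>G. G ` {1..m} \<subseteq> {1..k} \<and> (\<forall>x\<in>J. F x = G (H x))"
    using refine[OF assms(1) finP qP] by blast
  have "\<exists>u\<in>Qset {1..m} (Pow {1..m}) (quot J phi m H) k. edist k u v \<le> e"
    if k: "k \<in> K" and v: "v \<in> Qset J B phi k" for k v
  proof -
    obtain u where u: "u \<in> N k" "edist k u v \<le> e" using N(3)[OF v] by blast
    have uQ: "u \<in> Qset J B phi k" using u(1) N(2) by blast
    have "(k, pick k u) \<in> P" unfolding P_def using k u(1) by force
    then obtain G where G: "G ` {1..m} \<subseteq> {1..k}" "\<forall>x\<in>J. pick k u x = G (H x)"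
      using mH(2) by fast
    have "quot {1..m} (quot J phi m H) k G = quot J phi k (\<lambda>x. G (H x))"
      by (rule quot_comp[OF mH(1) G(1)])
    also have "\<dots> = quot J phi k (pick k u)" using G(2) by (intro quot_cong) simp
    also have "\<dots> = u" using pick[OF uQ] by simp
    finally have eq: "quot {1..m} (quot J phi m H) k G = u" .
    have "quotient_map {1..m} (Pow {1..m}) k G" using G(1) unfolding quotient_map_def by auto
    then have "u \<in> Qset {1..m} (Pow {1..m}) (quot J phi m H) k" unfolding Qset_def using eq by blast
    then show ?thesis using u(2) by blast
  qed
  then show ?thesis using mH(1) by (intro exI[of _ m] exI[of _ H]) simp
qed

theorem theorem4p1:
  fixes J :: "'a set" and B :: "'a set set" and phi :: "'a set \<Rightarrow> real"
  assumes "algebra J B"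
    and "\<exists>C. \<forall>A\<in>B. \<bar>phi A\<bar> \<le> C"
    and "phi {} = 0"
  shows "\<exists>(ks :: nat \<Rightarrow> nat) (psi :: nat \<Rightarrow> nat set \<Rightarrow> real).
           (\<forall>n. psi n \<in> Qset J B phi (ks n)) \<and>
           (\<forall>k\<ge>1. (\<lambda>n. hdist k (Qset {1..ks n} (Pow {1..ks n}) (psi n) k) (Qset J B phi k))
                    \<longlonglongrightarrow> 0)"
proof -
  obtain C where C: "\<forall>A\<in>B. \<bar>phi A\<bar> \<le> C" using assms(2) by blast
  have "\<forall>n. \<exists>m H. quotient_map J B m H \<and> (\<forall>k\<in>{1..n}. \<forall>v\<in>Qset J B phi k.
           \<exists>u\<in>Qset {1..m} (Pow {1..m}) (quot J phi m H) k. edist k u v \<le> inverse (real (Suc n)))"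
    using approx[OF assms(1) C] by simp
  then have "\<exists>ks Hs. \<forall>n. quotient_map J B (ks n) (Hs n) \<and> (\<forall>k\<in>{1..n}. \<forall>v\<in>Qset J B phi k.
           \<exists>u\<in>Qset {1..ks n} (Pow {1..ks n}) (quot J phi (ks n) (Hs n)) k. edist k u v \<le> inverse (real (Suc n)))"
    by (subst choice_iff[symmetric], subst choice_iff[symmetric]) simp
  then obtain ks Hs where KH: "\<And>n. quotient_map J B (ks n) (Hs n)"
    "\<And>n k v. k \<in> {1..n} \<Longrightarrow> v \<in> Qset J B phi k \<Longrightarrow>
       \<exists>u\<in>Qset {1..ks n} (Pow {1..ks n}) (quot J phi (ks n) (Hs n)) k. edist k u v \<le> inverse (real (Suc n))"
    by blast
  define psi where "psi = (\<lambda>n. quot J phi (ks n) (Hs n))"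
  have 1: "\<forall>n. psi n \<in> Qset J B phi (ks n)" unfolding psi_def Qset_def using KH(1) by blast
  have 2: "(\<lambda>n. hdist k (Qset {1..ks n} (Pow {1..ks n}) (psi n) k) (Qset J B phi k)) \<longlonglongrightarrow> 0"
    if k: "k \<ge> 1" for k
  proof (rule Lim_null_comparison[OF _ LIMSEQ_inverse_real_of_nat])
    show "\<forall>\<^sub>F n in sequentially. norm (hdist k (Qset {1..ks n} (Pow {1..ks n}) (psi n) k) (Qset J B phi k))
            \<le> inverse (real (Suc n))"
    proof (rule eventually_sequentiallyI[of k])
      fix n assume "k \<le> n"
      then have kn: "k \<in> {1..n}" using k by simp
      have "0 \<le> hdist k (Qset {1..ks n} (Pow {1..ks n}) (psi n) k) (Qset J B phi k) \<and>
            hdist k (Qset {1..ks n} (Pow {1..ks n}) (psi n) k) (Qset J B phi k) \<le> inverse (real (Suc n))"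
        unfolding psi_def
        by (rule hdist_bound[OF Qset_sub[OF assms(1) KH(1)] Qset_nonempty[OF k]]) (rule KH(2)[OF kn])
      then show "norm (hdist k (Qset {1..ks n} (Pow {1..ks n}) (psi n) k) (Qset J B phi k))
            \<le> inverse (real (Suc n))" by simp
    qed
  qed
  show ?thesis using 1 2 by blast
qed

end
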